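(* Let $G$ be a group and $\mathcal{B}_1,\mathcal{B}_2:G\to G$ maps, and let $a\circ b=\mathcal{B}_1(a)b\mathcal{B}_2(a)$. The following are equivalent: (i) $(G,\mathcal{B}_1,\mathcal{B}_2)$ is a Rota-Baxter system of groups; (ii) $\circ$ is associative and $\mathcal{B}_1$ is a semigroup homomorphism from $(G,\circ)$ to $(G,\cdot)$; (iii) $\circ$ is associative and $\mathcal{B}_2$ is a semigroup anti-homomorphism from $(G,\circ)$ to $(G,\cdot)$, i.e. $\mathcal{B}_2(a\circ b)=\mathcal{B}_2(b)\mathcal{B}_2(a)$.
   Context: A Rota-Baxter system of groups is a triple $(G,\mathcal{B}_1,\mathcal{B}_2)$ where $G$ is a group and $\mathcal{B}_1,\mathcal{B}_2:G\to G$ are maps such that for all $a,b\in G$: $\mathcal{B}_1(a)\mathcal{B}_1(b)=\mathcal{B}_1(\mathcal{B}_1(a)b\mathcal{B}_2(a))$ and $\mathcal{B}_2(b)\mathcal{B}_2(a)=\mathcal{B}_2(\mathcal{B}_1(a)b\mathcal{B}_2(a))$. *)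

theory Defs
  imports "HOL-Algebra.Group"
begin

definition rb_system :: "('g, 'b) monoid_scheme \<Rightarrow> ('g \<Rightarrow> 'g) \<Rightarrow> ('g \<Rightarrow> 'g) \<Rightarrow> bool" where
  "rb_system G B1 B2 \<longleftrightarrow> group G \<and> B1 \<in> carrier G \<rightarrow> carrier G \<and> B2 \<in> carrier G \<rightarrow> carrier G \<and>
     (\<forall>a\<in>carrier G. \<forall>b\<in>carrier G.
        B1 a \<otimes>\<^bsub>G\<^esub> B1 b = B1 (B1 a \<otimes>\<^bsub>G\<^esub> b \<otimes>\<^bsub>G\<^esub> B2 a) \<and>
        B2 b \<otimes>\<^bsub>G\<^esub> B2 a = B2 (B1 a \<otimes>\<^bsub>G\<^esub> b \<otimes>\<^bsub>G\<^esub> B2 a))"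

definition rb_circ :: "('g, 'b) monoid_scheme \<Rightarrow> ('g \<Rightarrow> 'g) \<Rightarrow> ('g \<Rightarrow> 'g) \<Rightarrow> 'g \<Rightarrow> 'g \<Rightarrow> 'g" where
  "rb_circ G B1 B2 a b = B1 a \<otimes>\<^bsub>G\<^esub> b \<otimes>\<^bsub>G\<^esub> B2 a"

end

theory Submission
  imports Defs
begin

lemma (in group) rb_aux:
  assumes B1: "B1 \<in> carrier G \<rightarrow> carrier G" and B2: "B2 \<in> carrier G \<rightarrow> carrier G"
  and a: "a \<in> carrier G" and b: "b \<in> carrier G" and c: "c \<in> carrier G"
  shows "rb_circ G B1 B2 (rb_circ G B1 B2 a b) c = B1 (rb_circ G B1 B2 a b) \<otimes> c \<otimes> B2 (rb_circ G B1 B2 a b)"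
    and "rb_circ G B1 B2 a (rb_circ G B1 B2 b c) = (B1 a \<otimes> B1 b) \<otimes> c \<otimes> (B2 b \<otimes> B2 a)"
    and "rb_circ G B1 B2 a b \<in> carrier G"
  using B1 B2 a b c by (auto simp: rb_circ_def m_assoc Pi_def)

lemma (in group) rb_main:
  assumes B1: "B1 \<in> carrier G \<rightarrow> carrier G" and B2: "B2 \<in> carrier G \<rightarrow> carrier G"
  shows "(rb_system G B1 B2
           \<longleftrightarrow> ((\<forall>a\<in>carrier G. \<forall>b\<in>carrier G. \<forall>c\<in>carrier G. rb_circ G B1 B2 (rb_circ G B1 B2 a b) c = rb_circ G B1 B2 a (rb_circ G B1 B2 b c))
               \<and> (\<forall>a\<in>carrier G. \<forall>b\<in>carrier G. B1 (rb_circ G B1 B2 a b) = B1 a \<otimes> B1 b)))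
       \<and> (rb_system G B1 B2
           \<longleftrightarrow> ((\<forall>a\<in>carrier G. \<forall>b\<in>carrier G. \<forall>c\<in>carrier G. rb_circ G B1 B2 (rb_circ G B1 B2 a b) c = rb_circ G B1 B2 a (rb_circ G B1 B2 b c))
               \<and> (\<forall>a\<in>carrier G. \<forall>b\<in>carrier G. B2 (rb_circ G B1 B2 a b) = B2 b \<otimes> B2 a)))"
proof -
  have grp: "group G" by (rule group_axioms)
  have cin: "\<And>a b. a \<in> carrier G \<Longrightarrow> b \<in> carrier G \<Longrightarrow> rb_circ G B1 B2 a b \<in> carrier G"
    using rb_aux(3)[OF B1 B2] by blast
  have b1: "B1 x \<in> carrier G" and b2: "B2 x \<in> carrier G" if "x \<in> carrier G" for x
    using B1 B2 that by auto
  have rbs: "rb_system G B1 B2 \<longleftrightarrow> (\<forall>a\<in>carrier G. \<forall>b\<in>carrier G.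
        B1 (rb_circ G B1 B2 a b) = B1 a \<otimes> B1 b \<and> B2 (rb_circ G B1 B2 a b) = B2 b \<otimes> B2 a)"
    unfolding rb_system_def rb_circ_def using grp B1 B2 by auto
  let ?A = "\<forall>a\<in>carrier G. \<forall>b\<in>carrier G. \<forall>c\<in>carrier G. rb_circ G B1 B2 (rb_circ G B1 B2 a b) c = rb_circ G B1 B2 a (rb_circ G B1 B2 b c)"
  have keyeq: "B1 (rb_circ G B1 B2 a b) \<otimes> B2 (rb_circ G B1 B2 a b) = (B1 a \<otimes> B1 b) \<otimes> (B2 b \<otimes> B2 a)"
    if A: ?A and a: "a \<in> carrier G" and b: "b \<in> carrier G" for a b
  proof -
    have "rb_circ G B1 B2 (rb_circ G B1 B2 a b) \<one> = rb_circ G B1 B2 a (rb_circ G B1 B2 b \<one>)"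
      using A a b by auto
    thus ?thesis using rb_aux[OF B1 B2 a b one_closed] cin[OF a b] b1 b2 a b by simp
  qed
  have assoc: ?A if R: "rb_system G B1 B2"
  proof (intro ballI)
    fix a b c assume a: "a \<in> carrier G" and b: "b \<in> carrier G" and c: "c \<in> carrier G"
    show "rb_circ G B1 B2 (rb_circ G B1 B2 a b) c = rb_circ G B1 B2 a (rb_circ G B1 B2 b c)"
      using rb_aux[OF B1 B2 a b c] R rbs a b by simp
  qed
  have d1: "B2 (rb_circ G B1 B2 a b) = B2 b \<otimes> B2 a"
    if A: ?A and h: "B1 (rb_circ G B1 B2 a b) = B1 a \<otimes> B1 b" and a: "a \<in> carrier G" and b: "b \<in> carrier G" for a b
  proof -
    have "(B1 a \<otimes> B1 b) \<otimes> B2 (rb_circ G B1 B2 a b) = (B1 a \<otimes> B1 b) \<otimes> (B2 b \<otimes> B2 a)"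
      using keyeq[OF A a b] h by simp
    thus ?thesis using b1 b2 a b cin[OF a b] by simp
  qed
  have d2: "B1 (rb_circ G B1 B2 a b) = B1 a \<otimes> B1 b"
    if A: ?A and h: "B2 (rb_circ G B1 B2 a b) = B2 b \<otimes> B2 a" and a: "a \<in> carrier G" and b: "b \<in> carrier G" for a b
  proof -
    have "B1 (rb_circ G B1 B2 a b) \<otimes> (B2 b \<otimes> B2 a) = (B1 a \<otimes> B1 b) \<otimes> (B2 b \<otimes> B2 a)"
      using keyeq[OF A a b] h by simp
    thus ?thesis using b1 b2 a b cin[OF a b] by simp
  qed
  show ?thesis using rbs assoc d1 d2 by blast
qed

theorem proposition3p2:
  fixes G (structure) and B1 B2 :: "'g \<Rightarrow> 'g"
  assumes "group G"
    and "B1 \<in> carrier G \<rightarrow> carrier G" and "B2 \<in> carrier G \<rightarrow> carrier G"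
  defines "circ \<equiv> rb_circ G B1 B2"
  shows "(rb_system G B1 B2
           \<longleftrightarrow> ((\<forall>a\<in>carrier G. \<forall>b\<in>carrier G. \<forall>c\<in>carrier G. circ (circ a b) c = circ a (circ b c))
               \<and> (\<forall>a\<in>carrier G. \<forall>b\<in>carrier G. B1 (circ a b) = B1 a \<otimes> B1 b)))
       \<and> (rb_system G B1 B2
           \<longleftrightarrow> ((\<forall>a\<in>carrier G. \<forall>b\<in>carrier G. \<forall>c\<in>carrier G. circ (circ a b) c = circ a (circ b c))
               \<and> (\<forall>a\<in>carrier G. \<forall>b\<in>carrier G. B2 (circ a b) = B2 b \<otimes> B2 a)))"
  unfolding circ_def using group.rb_main[OF assms(1-3)] .

end
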